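(* Let $(a_N)$ be a sequence of positive numbers and, for each $N$, let $P_{N,a_N}$ be the probability on sequences $(n_j)_{j\ge0}$ of nonnegative integers with $\sum_jn_j=N$ given by $P_{N,a_N}((n_j))\propto e^{-a_N\sum_jjn_j}$, with $\langle n_0\rangle_{N,a_N}$ the expectation of $n_0$. Let $\lambda_N=1-m_N/N$ with integers $0\le m_N\le N$. Suppose $\lambda_N\to\lambda\le1$ and $(1-\lambda_N)Na_N-\ln N\to\infty$. Then $P_{N,a_N}(n_0/N\ge\lambda_N)\to1$ and $\lim_{N\to\infty}\frac1N\langle n_0\rangle_{N,a_N}\ge\lambda$. If $Na_N/\ln N\to\infty$, then $\frac1N\langle n_0\rangle_{N,a_N}\to1$, i.e. there is complete Bose–Einstein condensation.
   Context: This is the canonical ensemble of $N$ noninteracting bosons in a one-dimensional harmonic trap, $n_j$ being the occupation of the $j$-th level and $a_N=\beta(\varepsilon_1-\varepsilon_0)$. *)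

theory Defs
  imports "HOL-Analysis.Analysis"
begin

definition configs :: "nat \<Rightarrow> (nat \<Rightarrow> nat) set" where
  "configs N = {n. finite {j. n j \<noteq> 0} \<and> (\<Sum>j\<in>{j. n j \<noteq> 0}. n j) = N}"

definition energy :: "(nat \<Rightarrow> nat) \<Rightarrow> nat" where
  "energy n = (\<Sum>j\<in>{j. n j \<noteq> 0}. j * n j)"

definition bweight :: "real \<Rightarrow> (nat \<Rightarrow> nat) \<Rightarrow> real" where
  "bweight a n = exp (- a * real (energy n))"

definition Zcan :: "nat \<Rightarrow> real \<Rightarrow> real" where
  "Zcan N a = infsum (bweight a) (configs N)"

definition Pcan :: "nat \<Rightarrow> real \<Rightarrow> ((nat \<Rightarrow> nat) \<Rightarrow> bool) \<Rightarrow> real" where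
  "Pcan N a A = infsum (bweight a) {n \<in> configs N. A n} / Zcan N a"

definition mean_n0 :: "nat \<Rightarrow> real \<Rightarrow> real" where
  "mean_n0 N a = infsum (\<lambda>n. real (n 0) * bweight a n) (configs N) / Zcan N a"

end

theory Submission
  imports Defs
begin


lemma sum_supp_eq:
  fixes n :: "nat \<Rightarrow> nat" and K :: nat
  assumes "{j. n j \<noteq> 0} \<subseteq> {..<K}"
  shows "(\<Sum>j\<in>{j. n j \<noteq> 0}. n j) = (\<Sum>j<K. n j)"
  by (rule sum.mono_neutral_left) (use assms in auto)

lemma energy_eq:
  fixes n :: "nat \<Rightarrow> nat" and K :: nat
  assumes "{j. n j \<noteq> 0} \<subseteq> {..<K}"
  shows "energy n = (\<Sum>j<K. j * n j)"
  unfolding energy_def by (rule sum.mono_neutral_left) (use assms in auto)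

lemma configsD:
  assumes "n \<in> configs N" "{j. n j \<noteq> 0} \<subseteq> {..<K}"
  shows "(\<Sum>j<K. n j) = N"
  using assms sum_supp_eq[OF assms(2)] unfolding configs_def by auto

lemma configsI:
  assumes "{j. n j \<noteq> 0} \<subseteq> {..<K}" "(\<Sum>j<K. n j) = N"
  shows "n \<in> configs N"
  using assms sum_supp_eq[OF assms(1)] finite_subset[OF assms(1)] unfolding configs_def by auto

lemma configs_bound:
  assumes "n \<in> configs N"
  obtains K where "{j. n j \<noteq> 0} \<subseteq> {..<K}" "K \<ge> k0"
proof -
  have "finite {j. n j \<noteq> 0}" using assms unfolding configs_def by auto
  then obtain K where "{j. n j \<noteq> 0} \<subseteq> {..<K}" using finite_nat_iff_bounded by auto
  moreover have "{..<K} \<subseteq> {..<max K k0}" by auto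
  ultimately show ?thesis using that[of "max K k0"] by (meson max.cobounded2 order_trans)
qed

lemma configs_le:
  assumes "n \<in> configs N" shows "n j \<le> N"
proof -
  obtain K where K: "{j. n j \<noteq> 0} \<subseteq> {..<K}" "K \<ge> Suc j" using configs_bound[OF assms] by blast
  have "n j \<le> (\<Sum>i<K. n i)" by (rule member_le_sum) (use K in auto)
  then show ?thesis using configsD[OF assms K(1)] by simp
qed

definition shift :: "(nat \<Rightarrow> nat) \<Rightarrow> (nat \<Rightarrow> nat)" where
  "shift n = (\<lambda>j. if j = 0 then n 0 + n 1 else n (Suc j))"

lemma shift_props:
  assumes "n \<in> configs N"
  shows "shift n \<in> configs N" "energy n = energy (shift n) + (N - n 0)"
proof -
  obtain K0 where K0: "{j. n j \<noteq> 0} \<subseteq> {..<K0}" "K0 \<ge> 2"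
    using configs_bound[OF assms] by blast
  define K where "K = K0 - 2"
  have KK: "K0 = Suc (Suc K)" using K0(2) unfolding K_def by simp
  have K: "{j. n j \<noteq> 0} \<subseteq> {..<Suc (Suc K)}" using K0(1) KK by simp
  have K2: "{j. shift n j \<noteq> 0} \<subseteq> {..<Suc K}"
    using K by (auto simp: shift_def split: if_splits)
  have sN: "(\<Sum>j<Suc (Suc K). n j) = N" using configsD[OF assms K(1)] .
  have e1: "(\<Sum>j<Suc (Suc K). n j) = n 0 + n 1 + (\<Sum>j<K. n (Suc (Suc j)))"
    by (simp only: sum.lessThan_Suc_shift) simp_all
  have e2: "(\<Sum>j<Suc K. shift n j) = n 0 + n 1 + (\<Sum>j<K. n (Suc (Suc j)))"
    by (simp only: sum.lessThan_Suc_shift) (simp_all add: shift_def)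
  show "shift n \<in> configs N"
    by (rule configsI[OF K2]) (use e1 e2 sN in simp)
  have en: "energy n = (\<Sum>j<Suc (Suc K). j * n j)" by (rule energy_eq[OF K(1)])
  have en2: "energy (shift n) = (\<Sum>j<Suc K. j * shift n j)" by (rule energy_eq[OF K2])
  have a1: "(\<Sum>j<Suc (Suc K). j * n j) = (\<Sum>j<Suc K. n (Suc j)) + (\<Sum>j<Suc K. j * n (Suc j))"
    by (simp only: sum.lessThan_Suc_shift) (simp_all add: sum.distrib)
  have a2: "(\<Sum>j<Suc K. j * n (Suc j)) = (\<Sum>j<K. Suc j * n (Suc (Suc j)))"
    by (simp only: sum.lessThan_Suc_shift)
  have a3: "(\<Sum>j<Suc K. j * shift n j) = (\<Sum>j<K. Suc j * n (Suc (Suc j)))"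
    by (simp only: sum.lessThan_Suc_shift) (simp_all add: shift_def)
  have a4: "(\<Sum>j<Suc K. n (Suc j)) = N - n 0"
    using sN by (simp only: sum.lessThan_Suc_shift)
  show "energy n = energy (shift n) + (N - n 0)"
    using en en2 a1 a2 a3 a4 by simp
qed

lemma shift_inj:
  assumes "shift n = shift n'" "n 1 = n' 1"
  shows "n = n'"
proof
  fix j
  show "n j = n' j"
  proof (cases j)
    case 0 then show ?thesis using fun_cong[OF assms(1), of 0] assms(2) by (simp add: shift_def)
  next
    case (Suc i)
    show ?thesis
    proof (cases i)
      case 0 then show ?thesis using assms(2) Suc by simp
    next
      case (Suc k) then show ?thesis using fun_cong[OF assms(1), of i] \<open>j = Suc i\<close> by (simp add: shift_def)
    qed
  qed
qed


definition remv :: "(nat \<Rightarrow> nat) \<Rightarrow> (nat \<Rightarrow> nat) \<times> nat" where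
  "remv n = (let l = (LEAST j. n j \<noteq> 0) in (\<lambda>j. if j = l then n j - 1 else n j, l))"

lemma remv_props:
  assumes "n \<in> configs (Suc N)"
  shows "fst (remv n) \<in> configs N" "energy n = energy (fst (remv n)) + snd (remv n)"
    "\<And>j. n j = fst (remv n) j + (if j = snd (remv n) then 1 else 0)"
proof -
  define l where "l = (LEAST j. n j \<noteq> 0)"
  define n' where "n' = (\<lambda>j. if j = l then n j - 1 else n j)"
  have r: "remv n = (n', l)" unfolding remv_def l_def n'_def Let_def by simp
  obtain K where K: "{j. n j \<noteq> 0} \<subseteq> {..<K}" "K \<ge> 0" using configs_bound[OF assms] by blast
  have sN: "(\<Sum>j<K. n j) = Suc N" using configsD[OF assms K(1)] .
  have "\<exists>j. n j \<noteq> 0"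
  proof (rule ccontr)
    assume "\<not> ?thesis" then have "(\<Sum>j<K. n j) = 0" by simp
    then show False using sN by simp
  qed
  then have nl: "n l \<noteq> 0" unfolding l_def by (rule LeastI_ex)
  have lK: "l < K" using K nl by blast
  have dec: "\<And>j. n j = n' j + (if j = l then 1 else 0)" unfolding n'_def using nl by auto
  then show "\<And>j. n j = fst (remv n) j + (if j = snd (remv n) then 1 else 0)" using r by simp
  have K2: "{j. n' j \<noteq> 0} \<subseteq> {..<K}" using K lK unfolding n'_def by auto
  have "(\<Sum>j<K. n j) = (\<Sum>j<K. n' j) + (\<Sum>j<K. (if j = l then 1 else 0))"
    by (subst dec) (simp add: sum.distrib)
  also have "(\<Sum>j<K. (if j = l then 1 else 0::nat)) = 1" using lK by simp
  finally have "(\<Sum>j<K. n' j) = N" using sN by simp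
  then show "fst (remv n) \<in> configs N" using configsI[OF K2] r by simp
  have "energy n = (\<Sum>j<K. j * n j)" by (rule energy_eq[OF K(1)])
  also have "\<dots> = (\<Sum>j<K. j * n' j + (if j = l then j else 0))"
    by (rule sum.cong[OF refl]) (subst dec, simp add: algebra_simps)
  also have "\<dots> = (\<Sum>j<K. j * n' j) + (\<Sum>j<K. (if j = l then j else 0))"
    by (rule sum.distrib)
  also have "(\<Sum>j<K. (if j = l then j else 0)) = l" using lK by simp
  also have "(\<Sum>j<K. j * n' j) = energy n'" by (rule energy_eq[OF K2, symmetric])
  finally show "energy n = energy (fst (remv n)) + snd (remv n)" using r by simp
qed

lemma remv_inj: "inj_on remv (configs (Suc N))"
proof (rule inj_onI)
  fix x y assume x: "x \<in> configs (Suc N)" and y: "y \<in> configs (Suc N)" and e: "remv x = remv y"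
  show "x = y"
  proof
    fix j show "x j = y j" using remv_props(3)[OF x, of j] remv_props(3)[OF y, of j] e by simp
  qed
qed

lemma bweight_pos: "bweight a n > 0" unfolding bweight_def by simp

lemma finite_geom_le:
  fixes q :: real
  assumes "0 \<le> q" "q < 1" "finite B"
  shows "(\<Sum>l\<in>B. q ^ l) \<le> 1 / (1 - q)"
proof -
  have "(\<Sum>l\<in>B. q ^ l) \<le> (\<Sum>l. q ^ l)"
    by (rule sum_le_suminf) (use assms in \<open>auto intro: summable_geometric\<close>)
  also have "\<dots> = 1 / (1 - q)" using assms by (simp add: suminf_geometric)
  finally show ?thesis .
qed

lemma finite_bound:
  assumes apos: "a > 0"
  shows "finite F \<Longrightarrow> F \<subseteq> configs N \<Longrightarrow> sum (bweight a) F \<le> (1 / (1 - exp (- a))) ^ N"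
proof (induction N arbitrary: F)
  case 0
  have "configs 0 \<subseteq> {\<lambda>_. 0}"
  proof
    fix n assume n: "n \<in> configs 0"
    have "\<And>j. n j \<le> 0" using configs_le[OF n] by blast
    then show "n \<in> {\<lambda>_. 0}" by auto
  qed
  then have "F \<subseteq> {\<lambda>_. 0}" using 0 by blast
  then have "F = {} \<or> F = {\<lambda>_. 0}" by blast
  moreover have "bweight a (\<lambda>_. 0) = 1" unfolding bweight_def energy_def by simp
  ultimately show ?case by auto
next
  case (Suc N)
  define q where "q = exp (- a)"
  have q: "0 \<le> q" "q < 1" unfolding q_def using apos by auto
  define g where "g = (\<lambda>p :: (nat \<Rightarrow> nat) \<times> nat. bweight a (fst p) * q ^ snd p)"
  have inj: "inj_on remv F" using remv_inj Suc.prems(2) inj_on_subset by blast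
  have w: "bweight a n = g (remv n)" if "n \<in> F" for n
  proof -
    have "n \<in> configs (Suc N)" using that Suc.prems by blast
    from remv_props(2)[OF this] have e: "energy n = energy (fst (remv n)) + snd (remv n)" .
    have "- a * real (energy n) = - a * real (energy (fst (remv n))) + real (snd (remv n)) * (- a)"
      unfolding e by (simp add: algebra_simps)
    then have "exp (- a * real (energy n)) = exp (- a * real (energy (fst (remv n)))) * exp (- a) ^ snd (remv n)"
      by (simp only: exp_add exp_of_nat_mult)
    then show ?thesis unfolding g_def bweight_def q_def by simp
  qed
  have "sum (bweight a) F = sum (g \<circ> remv) F" using w by (intro sum.cong) auto
  also have "\<dots> = sum g (remv ` F)" by (rule sum.reindex[OF inj, symmetric])
  also have "\<dots> \<le> sum g (fst ` remv ` F \<times> snd ` remv ` F)"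
    by (rule sum_mono2) (use Suc.prems q subset_fst_snd[of "remv ` F"] in \<open>auto simp: g_def bweight_def intro!: finite_cartesian_product\<close>)
  also have "\<dots> = sum (bweight a) (fst ` remv ` F) * (\<Sum>l\<in>snd ` remv ` F. q ^ l)"
    unfolding g_def by (simp add: sum_product sum.cartesian_product case_prod_beta')
  also have "\<dots> \<le> (1 / (1 - exp (- a))) ^ N * (1 / (1 - q))"
  proof (rule mult_mono)
    show "sum (bweight a) (fst ` remv ` F) \<le> (1 / (1 - exp (- a))) ^ N"
      using Suc.prems remv_props(1) by (intro Suc.IH) auto
    show "(\<Sum>l\<in>snd ` remv ` F. q ^ l) \<le> 1 / (1 - q)"
      using q Suc.prems by (intro finite_geom_le) auto
  qed (use q apos in \<open>auto intro: sum_nonneg simp: q_def\<close>)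
  also have "\<dots> = (1 / (1 - exp (- a))) ^ Suc N" unfolding q_def by simp
  finally show ?case .
qed


lemma summ: assumes "a > 0" shows "bweight a summable_on configs N"
proof (rule nonneg_bdd_above_summable_on)
  show "\<And>x. x \<in> configs N \<Longrightarrow> 0 \<le> bweight a x" using bweight_pos less_imp_le by blast
  show "bdd_above (sum (bweight a) ` {F. F \<subseteq> configs N \<and> finite F})"
    by (rule bdd_aboveI2[where M = "(1 / (1 - exp (- a))) ^ N"]) (use finite_bound[OF assms] in auto)
qed

lemma Z_ge1:
  assumes "a > 0" shows "Zcan N a \<ge> 1"
proof -
  define g where "g = (\<lambda>j::nat. if j = 0 then N else 0)"
  have "{j. g j \<noteq> 0} \<subseteq> {..<1}" unfolding g_def by auto
  moreover have "(\<Sum>j<1. g j) = N" unfolding g_def by simp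
  ultimately have gc: "g \<in> configs N" by (rule configsI)
  have "energy g = 0" unfolding energy_def g_def by (auto intro: sum.neutral)
  then have "bweight a g = 1" unfolding bweight_def by simp
  then have "1 = sum (bweight a) {g}" by simp
  also have "\<dots> \<le> Zcan N a"
    unfolding Zcan_def by (rule finite_sum_le_infsum) (use gc summ[OF assms] in \<open>auto simp: bweight_def\<close>)
  finally show ?thesis .
qed

lemma bad_bound:
  assumes apos: "a > 0"
  shows "infsum (bweight a) {n \<in> configs N. \<not> N \<le> n 0 + m} \<le> (real N + 1) * exp (- a) ^ (m + 1) * Zcan N a"
proof (rule infsum_le_finite_sums)
  show "bweight a summable_on {n \<in> configs N. \<not> N \<le> n 0 + m}"
    by (rule summable_on_subset_banach[OF summ[OF apos]]) auto
  fix F assume F: "finite F" "F \<subseteq> {n \<in> configs N. \<not> N \<le> n 0 + m}"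
  define q where "q = exp (- a)"
  have q: "0 \<le> q" "q \<le> 1" unfolding q_def using apos by auto
  define \<Phi> where "\<Phi> = (\<lambda>n::nat \<Rightarrow> nat. (n 1, shift n))"
  have inj: "inj_on \<Phi> F" unfolding \<Phi>_def by (rule inj_onI) (auto intro: shift_inj)
  have w: "bweight a n \<le> q ^ (m + 1) * bweight a (shift n)" if "n \<in> F" for n
  proof -
    have nc: "n \<in> configs N" and nb: "\<not> N \<le> n 0 + m" using that F by auto
    have e: "energy n = energy (shift n) + (N - n 0)" by (rule shift_props(2)[OF nc])
    have "- a * real (energy n) = - a * real (energy (shift n)) + real (N - n 0) * (- a)"
      unfolding e by (simp add: algebra_simps)
    then have "bweight a n = bweight a (shift n) * q ^ (N - n 0)"
      unfolding bweight_def q_def by (simp only: exp_add exp_of_nat_mult)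
    also have "\<dots> \<le> bweight a (shift n) * q ^ (m + 1)"
      by (rule mult_left_mono[OF power_decreasing]) (use nb q in \<open>auto simp: bweight_def\<close>)
    finally show ?thesis by (simp add: mult.commute)
  qed
  have "sum (bweight a) F \<le> (\<Sum>n\<in>F. q ^ (m + 1) * bweight a (shift n))"
    by (rule sum_mono) (rule w)
  also have "\<dots> = q ^ (m + 1) * (\<Sum>n\<in>F. bweight a (shift n))" by (simp add: sum_distrib_left)
  also have "(\<Sum>n\<in>F. bweight a (shift n)) = sum ((\<lambda>p. bweight a (snd p)) \<circ> \<Phi>) F"
    unfolding \<Phi>_def by simp
  also have "\<dots> = sum (\<lambda>p. bweight a (snd p)) (\<Phi> ` F)" by (rule sum.reindex[OF inj, symmetric])
  also have "\<dots> \<le> sum (\<lambda>p. bweight a (snd p)) ({..N} \<times> shift ` F)"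
  proof (rule sum_mono2)
    show "\<Phi> ` F \<subseteq> {..N} \<times> shift ` F"
      unfolding \<Phi>_def using F configs_le by fastforce
  qed (use F in \<open>auto simp: bweight_def\<close>)
  also have "\<dots> = (\<Sum>i\<in>{..N}. \<Sum>y\<in>shift ` F. bweight a y)"
    by (subst sum.cartesian_product') simp
  also have "\<dots> = (real N + 1) * sum (bweight a) (shift ` F)" by simp
  also have "sum (bweight a) (shift ` F) \<le> Zcan N a"
    unfolding Zcan_def
    by (rule finite_sum_le_infsum) (use F shift_props(1) summ[OF apos] in \<open>auto simp: bweight_def\<close>)
  finally show "sum (bweight a) F \<le> (real N + 1) * exp (- a) ^ (m + 1) * Zcan N a"
    unfolding q_def using q by (simp add: mult_left_mono mult_ac q_def)
qed


lemma P_bounds: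
  assumes apos: "a > 0"
  shows "1 - (real N + 1) * exp (- a) ^ (m + 1) \<le> Pcan N a (\<lambda>n. N \<le> n 0 + m)"
    "Pcan N a (\<lambda>n. N \<le> n 0 + m) \<le> 1"
proof -
  define G where "G = {n \<in> configs N. N \<le> n 0 + m}"
  define B where "B = {n \<in> configs N. \<not> N \<le> n 0 + m}"
  have CU: "configs N = G \<union> B" "G \<inter> B = {}" unfolding G_def B_def by auto
  have sG: "bweight a summable_on G" by (rule summable_on_subset_banach[OF summ[OF apos]]) (auto simp: G_def)
  have sB: "bweight a summable_on B" by (rule summable_on_subset_banach[OF summ[OF apos]]) (auto simp: B_def)
  have Z: "Zcan N a = infsum (bweight a) G + infsum (bweight a) B"
    unfolding Zcan_def CU(1) by (rule infsum_Un_disjoint[OF sG sB CU(2)])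
  have Zp: "Zcan N a \<ge> 1" by (rule Z_ge1[OF apos])
  have IB0: "infsum (bweight a) B \<ge> 0" by (rule infsum_nonneg) (simp add: less_imp_le bweight_pos)
  have IB: "infsum (bweight a) B \<le> (real N + 1) * exp (- a) ^ (m + 1) * Zcan N a"
    unfolding B_def by (rule bad_bound[OF apos])
  have P: "Pcan N a (\<lambda>n. N \<le> n 0 + m) = infsum (bweight a) G / Zcan N a"
    unfolding Pcan_def G_def ..
  have "infsum (bweight a) G / Zcan N a = 1 - infsum (bweight a) B / Zcan N a"
    using Z Zp by (simp add: field_simps)
  moreover have "infsum (bweight a) B / Zcan N a \<le> (real N + 1) * exp (- a) ^ (m + 1)"
    using IB Zp by (simp add: divide_le_eq)
  moreover have "infsum (bweight a) B / Zcan N a \<ge> 0" using IB0 Zp by simp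
  ultimately show "1 - (real N + 1) * exp (- a) ^ (m + 1) \<le> Pcan N a (\<lambda>n. N \<le> n 0 + m)"
    "Pcan N a (\<lambda>n. N \<le> n 0 + m) \<le> 1" using P by linarith+
qed

lemma mean_bounds:
  assumes apos: "a > 0"
  shows "mean_n0 N a \<ge> (real N - real m) * Pcan N a (\<lambda>n. N \<le> n 0 + m)"
    "mean_n0 N a \<le> real N"
proof -
  define G where "G = {n \<in> configs N. N \<le> n 0 + m}"
  have s: "bweight a summable_on configs N" by (rule summ[OF apos])
  have w0: "\<And>n. 0 \<le> bweight a n" by (simp add: less_imp_le bweight_pos)
  have sN: "(\<lambda>n. real N * bweight a n) summable_on configs N"
    by (rule summable_on_cmult_right[OF s])
  have s0: "(\<lambda>n. real (n 0) * bweight a n) summable_on configs N"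
    by (rule summable_on_comparison_test[OF sN]) (use configs_le w0 in \<open>auto intro: mult_right_mono\<close>)
  have sG: "bweight a summable_on G" by (rule summable_on_subset_banach[OF s]) (auto simp: G_def)
  have s0G: "(\<lambda>n. real (n 0) * bweight a n) summable_on G"
    by (rule summable_on_subset_banach[OF s0]) (auto simp: G_def)
  have Zp: "Zcan N a \<ge> 1" by (rule Z_ge1[OF apos])
  have "(real N - real m) * infsum (bweight a) G = infsum (\<lambda>n. (real N - real m) * bweight a n) G"
    by (rule infsum_cmult_right[symmetric]) (use sG in auto)
  also have "\<dots> \<le> infsum (\<lambda>n. real (n 0) * bweight a n) G"
    by (rule infsum_mono) (use sG s0G w0 in \<open>auto simp: G_def intro!: summable_on_cmult_right mult_right_mono\<close>)
  also have "\<dots> \<le> infsum (\<lambda>n. real (n 0) * bweight a n) (configs N)"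
    by (rule infsum_mono_neutral[OF s0G s0]) (use w0 in \<open>auto simp: G_def\<close>)
  finally have "(real N - real m) * infsum (bweight a) G / Zcan N a \<le> mean_n0 N a"
    unfolding mean_n0_def using Zp by (simp add: divide_right_mono)
  then show "mean_n0 N a \<ge> (real N - real m) * Pcan N a (\<lambda>n. N \<le> n 0 + m)"
    unfolding Pcan_def G_def by simp
  have "infsum (\<lambda>n. real (n 0) * bweight a n) (configs N) \<le> infsum (\<lambda>n. real N * bweight a n) (configs N)"
    by (rule infsum_mono[OF s0 sN]) (use configs_le w0 in \<open>auto intro: mult_right_mono\<close>)
  also have "\<dots> = real N * Zcan N a" unfolding Zcan_def by (rule infsum_cmult_right) (use s in auto)
  finally show "mean_n0 N a \<le> real N" unfolding mean_n0_def using Zp by (simp add: divide_le_eq)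
qed


lemma event_eq:
  assumes "N > 0"
  shows "Pcan N a (\<lambda>n. real (n 0) / real N \<ge> 1 - real m / real N) = Pcan N a (\<lambda>n. N \<le> n 0 + m)"
proof -
  have "real (n 0) / real N \<ge> 1 - real m / real N \<longleftrightarrow> N \<le> n 0 + m" for n :: "nat \<Rightarrow> nat"
  proof -
    have "1 - real m / real N = (real N - real m) / real N" using assms by (simp add: field_simps)
    then have "real (n 0) / real N \<ge> 1 - real m / real N \<longleftrightarrow> real N - real m \<le> real (n 0)"
      using assms by (simp add: divide_le_cancel)
    also have "\<dots> \<longleftrightarrow> real N \<le> real (n 0) + real m" by linarith
    also have "\<dots> \<longleftrightarrow> N \<le> n 0 + m" by linarith
    finally show ?thesis .
  qed
  then show ?thesis unfolding Pcan_def by simp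
qed

lemma exp_neg_lim:
  fixes h :: "nat \<Rightarrow> real"
  assumes "filterlim h at_top sequentially"
  shows "(\<lambda>N. exp (- h N)) \<longlonglongrightarrow> 0"
proof -
  have "filterlim (\<lambda>N. - h N) at_bot sequentially"
    using assms filterlim_uminus_at_bot[of "\<lambda>N. - h N"] by simp
  then show ?thesis by (rule filterlim_compose[OF exp_at_bot])
qed

lemma part1:
  fixes a :: "nat \<Rightarrow> real" and m :: "nat \<Rightarrow> nat" and lam :: real
  assumes apos: "\<And>N. a N > 0"
    and mle: "\<forall>N. m N \<le> N"
    and lim: "(\<lambda>N. 1 - real (m N) / real N) \<longlonglongrightarrow> lam"
    and fl: "filterlim (\<lambda>N. (1 - (1 - real (m N) / real N)) * real N * a N - ln (real N)) at_top sequentially"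
  shows "(\<lambda>N. Pcan N (a N) (\<lambda>n. real (n 0) / real N \<ge> 1 - real (m N) / real N)) \<longlonglongrightarrow> 1"
    "liminf (\<lambda>N. ereal (mean_n0 N (a N) / real N)) \<ge> ereal lam"
proof -
  define h where "h = (\<lambda>N. (1 - (1 - real (m N) / real N)) * real N * a N - ln (real N))"
  define P where "P = (\<lambda>N. Pcan N (a N) (\<lambda>n. real (n 0) / real N \<ge> 1 - real (m N) / real N))"
  have e0: "(\<lambda>N. exp (- h N)) \<longlonglongrightarrow> 0" using exp_neg_lim fl unfolding h_def by blast
  have low: "1 - 2 * exp (- h N) \<le> P N \<and> P N \<le> 1" if "N \<ge> 1" for N
  proof -
    have N0: "N > 0" using that by simp
    have PE: "P N = Pcan N (a N) (\<lambda>n. N \<le> n 0 + m N)" unfolding P_def by (rule event_eq[OF N0])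
    have hN: "h N = real (m N) * a N - ln (real N)"
      unfolding h_def using N0 by (simp add: field_simps)
    have "exp (- h N) = real N * exp (- a N * real (m N))"
      unfolding hN using N0 by (simp add: exp_diff exp_minus field_simps mult.commute)
    moreover have "(real N + 1) * exp (- a N) ^ (m N + 1) \<le> 2 * (real N * exp (- a N * real (m N)))"
    proof -
      have "exp (- a N) ^ (m N + 1) = exp (- a N * real (m N)) * exp (- a N)"
        by (simp add: exp_of_nat_mult[symmetric] mult.commute flip: exp_add)
      also have "\<dots> \<le> exp (- a N * real (m N))" using apos[of N] by simp
      finally have "(real N + 1) * exp (- a N) ^ (m N + 1) \<le> (real N + 1) * exp (- a N * real (m N))"
        by (simp add: mult_left_mono)
      also have "\<dots> \<le> (2 * real N) * exp (- a N * real (m N))"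
        using that by (intro mult_right_mono) auto
      finally show ?thesis by simp
    qed
    ultimately show ?thesis using P_bounds[OF apos[of N], of N "m N"] PE by linarith
  qed
  have t1: "(\<lambda>N. 1 - 2 * exp (- h N)) \<longlonglongrightarrow> 1"
    using tendsto_diff[OF tendsto_const tendsto_mult[OF tendsto_const e0], of 1 2] by simp
  show "(\<lambda>N. Pcan N (a N) (\<lambda>n. real (n 0) / real N \<ge> 1 - real (m N) / real N)) \<longlonglongrightarrow> 1"
    unfolding P_def[symmetric]
  proof (rule tendsto_sandwich[OF _ _ t1 tendsto_const])
    show "\<forall>\<^sub>F N in sequentially. 1 - 2 * exp (- h N) \<le> P N"
      using low eventually_sequentially by blast
    show "\<forall>\<^sub>F N in sequentially. P N \<le> 1"
      using low eventually_sequentially by blast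
  qed
  then have Pl: "P \<longlonglongrightarrow> 1" unfolding P_def .
  have lowm: "(1 - real (m N) / real N) * P N \<le> mean_n0 N (a N) / real N" if "N \<ge> 1" for N
  proof -
    have N0: "N > 0" using that by simp
    have PE: "P N = Pcan N (a N) (\<lambda>n. N \<le> n 0 + m N)" unfolding P_def by (rule event_eq[OF N0])
    have "(real N - real (m N)) * P N \<le> mean_n0 N (a N)" using mean_bounds(1)[OF apos[of N], of N "m N"] PE by simp
    then have "(real N - real (m N)) * P N / real N \<le> mean_n0 N (a N) / real N"
      by (rule divide_right_mono) simp
    moreover have "(real N - real (m N)) * P N / real N = (1 - real (m N) / real N) * P N"
      using N0 by (simp add: field_simps)
    ultimately show ?thesis by simp
  qed
  have tl: "(\<lambda>N. ereal ((1 - real (m N) / real N) * P N)) \<longlonglongrightarrow> ereal lam"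
    using tendsto_mult[OF lim Pl] by simp
  have "ereal lam = liminf (\<lambda>N. ereal ((1 - real (m N) / real N) * P N))"
    by (rule lim_imp_Liminf[OF _ tl, symmetric]) simp
  also have "\<dots> \<le> liminf (\<lambda>N. ereal (mean_n0 N (a N) / real N))"
  proof (rule Liminf_mono)
    show "\<forall>\<^sub>F N in sequentially. ereal ((1 - real (m N) / real N) * P N) \<le> ereal (mean_n0 N (a N) / real N)"
      unfolding eventually_sequentially
    proof (intro exI[of _ 1] allI impI)
      fix N :: nat assume "1 \<le> N"
      then show "ereal ((1 - real (m N) / real N) * P N) \<le> ereal (mean_n0 N (a N) / real N)"
        using lowm[of N] by (simp only: ereal_less_eq(3))
    qed
  qed
  finally show "liminf (\<lambda>N. ereal (mean_n0 N (a N) / real N)) \<ge> ereal lam" .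
qed




lemma part3:
  fixes a :: "nat \<Rightarrow> real"
  assumes apos: "\<And>N. a N > 0"
    and fl: "filterlim (\<lambda>N. real N * a N / ln (real N)) at_top sequentially"
  shows "(\<lambda>N. mean_n0 N (a N) / real N) \<longlonglongrightarrow> 1"
proof -
  define X where "X = (\<lambda>N. mean_n0 N (a N) / real N)"
  define f where "f = (\<lambda>N. real N * a N / ln (real N))"
  have lnt: "filterlim (\<lambda>N. ln (real N)) at_top sequentially"
    by (rule filterlim_compose[OF ln_at_top filterlim_real_sequentially])
  have key: "ereal (1 - \<epsilon>) \<le> liminf (\<lambda>N. ereal (X N))" if ep: "0 < \<epsilon>" "\<epsilon> < 1" for \<epsilon>
  proof -
    define m where "m = (\<lambda>N. nat \<lfloor>\<epsilon> * real N\<rfloor>)"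
    have rm: "real (m N) = of_int \<lfloor>\<epsilon> * real N\<rfloor>" for N
      unfolding m_def using ep by simp
    have mb: "\<epsilon> * real N - 1 < real (m N)" "real (m N) \<le> \<epsilon> * real N" for N
      unfolding rm by linarith+
    have mle: "\<forall>N. m N \<le> N"
    proof
      fix N have "real (m N) \<le> real N" using mb(2)[of N] ep
        using mult_left_le_one_le[of "real N" \<epsilon>] by simp
      then show "m N \<le> N" by simp
    qed
    have mlim: "(\<lambda>N. real (m N) / real N) \<longlonglongrightarrow> \<epsilon>"
    proof (rule tendsto_sandwich[OF _ _ _ tendsto_const])
      show "(\<lambda>N. \<epsilon> - 1 / real N) \<longlonglongrightarrow> \<epsilon>"
        using tendsto_diff[OF tendsto_const lim_1_over_n, of \<epsilon>] by simp
      show "\<forall>\<^sub>F N in sequentially. \<epsilon> - 1 / real N \<le> real (m N) / real N"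
        unfolding eventually_sequentially
      proof (intro exI[of _ 1] allI impI)
        fix N :: nat assume "1 \<le> N"
        then have "\<epsilon> - 1 / real N = (\<epsilon> * real N - 1) / real N" by (simp add: field_simps)
        also have "\<dots> \<le> real (m N) / real N" by (intro divide_right_mono) (use mb(1)[of N] in linarith, simp)
        finally show "\<epsilon> - 1 / real N \<le> real (m N) / real N" .
      qed
      show "\<forall>\<^sub>F N in sequentially. real (m N) / real N \<le> \<epsilon>"
        unfolding eventually_sequentially
      proof (intro exI[of _ 1] allI impI)
        fix N :: nat assume "1 \<le> N"
        then show "real (m N) / real N \<le> \<epsilon>" using mb(2)[of N] by (simp add: divide_le_eq mult.commute)
      qed
    qed
    have lim: "(\<lambda>N. 1 - real (m N) / real N) \<longlonglongrightarrow> 1 - \<epsilon>"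
      by (rule tendsto_diff[OF tendsto_const mlim])
    define k where "k = (\<lambda>N. (- 1) + \<epsilon> / 2 * f N)"
    have kt: "filterlim k at_top sequentially"
      unfolding k_def
      by (rule filterlim_tendsto_add_at_top[OF tendsto_const])
         (rule filterlim_tendsto_pos_mult_at_top[OF tendsto_const _ fl[folded f_def]], use ep in simp)
    have ev: "\<forall>\<^sub>F N in sequentially. k N \<le> (1 - (1 - real (m N) / real N)) * real N * a N - ln (real N)"
    proof -
      have e1: "\<forall>\<^sub>F N in sequentially. 0 \<le> k N" using kt by (simp add: filterlim_at_top)
      have e2: "\<forall>\<^sub>F N in sequentially. 1 \<le> ln (real N)" using lnt by (simp add: filterlim_at_top)
      have e3: "\<forall>\<^sub>F N in sequentially. 2 / \<epsilon> \<le> real N"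
        using filterlim_real_sequentially by (simp add: filterlim_at_top)
      show ?thesis using e1 e2 e3
      proof eventually_elim
        case (elim N)
        have lp: "ln (real N) > 0" using elim by simp
        then have N0: "N > 0" by (cases "N = 0") simp_all
        have "2 \<le> \<epsilon> * real N" using elim ep by (simp add: divide_le_eq mult.commute)
        then have "\<epsilon> * real N / 2 \<le> real (m N)" using mb(1)[of N] by linarith
        then have A: "\<epsilon> * real N / 2 * a N \<le> real (m N) * a N"
          using apos[of N] by (intro mult_right_mono) simp_all
        have B: "real N * a N = f N * ln (real N)" unfolding f_def using lp by simp
        have C: "(1 - (1 - real (m N) / real N)) * real N * a N = real (m N) * a N"
          using N0 by simp
        have "k N \<le> ln (real N) * k N"
          using elim by (simp add: mult_le_cancel_right1)
        also have "\<dots> = \<epsilon> * real N / 2 * a N - ln (real N)"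
          unfolding k_def using B by (simp add: algebra_simps)
        also have "\<dots> \<le> (1 - (1 - real (m N) / real N)) * real N * a N - ln (real N)"
          using A C by simp
        finally show ?case .
      qed
    qed
    have flm: "filterlim (\<lambda>N. (1 - (1 - real (m N) / real N)) * real N * a N - ln (real N)) at_top sequentially"
      by (rule filterlim_at_top_mono[OF kt ev])
    show ?thesis unfolding X_def by (rule part1(2)[OF apos mle lim flm])
  qed
  have lo: "ereal 1 \<le> liminf (\<lambda>N. ereal (X N))"
  proof (rule dense_le_bounded[of "ereal 0"])
    fix w assume w: "ereal 0 < w" "w < ereal 1"
    then obtain r where r: "w = ereal r" by (cases w) auto
    then have "0 < 1 - r" "1 - r < 1" using w by auto
    from key[OF this] show "w \<le> liminf (\<lambda>N. ereal (X N))" using r by simp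
  qed simp
  have up: "limsup (\<lambda>N. ereal (X N)) \<le> ereal 1"
  proof (rule Limsup_bounded)
    show "\<forall>\<^sub>F N in sequentially. ereal (X N) \<le> ereal 1"
    proof (rule always_eventually, rule allI)
      fix N
      have "mean_n0 N (a N) \<le> real N" by (rule mean_bounds(2)[OF apos])
      then have "X N \<le> 1" unfolding X_def by (cases "N = 0") (auto simp: divide_le_eq)
      then show "ereal (X N) \<le> ereal 1" by simp
    qed
  qed
  have "X \<longlonglongrightarrow> 1" by (rule limsup_le_liminf_real) (use lo up in auto)
  then show ?thesis unfolding X_def .
qed


theorem proposition3:
  fixes a :: "nat \<Rightarrow> real"
  assumes apos: "\<And>N. a N > 0"
  shows "(\<forall>(m :: nat \<Rightarrow> nat) (lam :: real).
            (\<forall>N. m N \<le> N)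
          \<longrightarrow> ((\<lambda>N. 1 - real (m N) / real N) \<longlonglongrightarrow> lam)
          \<longrightarrow> lam \<le> 1
          \<longrightarrow> filterlim (\<lambda>N. (1 - (1 - real (m N) / real N)) * real N * a N - ln (real N))
                at_top sequentially
          \<longrightarrow> ((\<lambda>N. Pcan N (a N)
                   (\<lambda>n. real (n 0) / real N \<ge> 1 - real (m N) / real N)) \<longlonglongrightarrow> 1)
              \<and> liminf (\<lambda>N. ereal (mean_n0 N (a N) / real N)) \<ge> ereal lam)
       \<and> (filterlim (\<lambda>N. real N * a N / ln (real N)) at_top sequentially
          \<longrightarrow> ((\<lambda>N. mean_n0 N (a N) / real N) \<longlonglongrightarrow> 1))"
  apply (intro conjI allI impI)
    apply (rule part1(1)[OF apos]; assumption)
   apply (rule part1(2)[OF apos]; assumption)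
  apply (rule part3[OF apos]; assumption)
  done

end
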